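(* Let $\Omega$ be a finite set of arbitrary cardinality, $m\in\Delta(\Omega)$, $\lambda\in[0,1)$, and consider the irreducible Markov chain on $\Omega$ with transitions $\pi(\omega\mid\omega)=(1-\lambda)m(\omega)+\lambda$ and $\pi(\omega'\mid\omega)=(1-\lambda)m(\omega')$ for $\omega'\ne\omega$ (so $m$ is invariant and $\phi(p)=m+\lambda(p-m)$). Let $r:\Omega\to\mathbb{R}$ and $\delta\in[0,1)$. If the initial belief is $p_1=m$, then the greedy strategy $\sigma_*$ is optimal at $p_1$.
   Context: Identify each $\omega\in\Omega$ with a unit vector of $\mathbb{R}^\Omega$ and $\Delta(\Omega)$ with the unit simplex. For $p\in\Delta(\Omega)$ let $\langle p,r\rangle=\sum_\omega p(\omega)r(\omega)$; $I=\{p:\langle p,r\rangle\ge0\}$, $J=\Delta(\Omega)\setminus I$. $\phi(q)=qM$ with $M$ the transition matrix. $\mathcal{S}(p)$ is the set of Borel probability measures on $\Delta(\Omega)$ with mean $p$, $\mu_p$ the Dirac mass at $p$. Decision problem from $p_1$: at each stage $n$, at belief $p_n$, the advisor chooses $\mu\in\mathcal{S}(p_n)$ (possibly depending on the past), a posterior $q_n\sim\mu$ is drawn, the stage payoff is $\mathbf{1}_{\{q_n\in I\}}$, and $p_{n+1}=\phi(q_n)$. A strategy's payoff is $\mathbb{E}[(1-\delta)\sum_{n\ge1}\delta^{n-1}\mathbf{1}_{\{q_n\in I\}}]$; $V_\delta(p_1)$ is the maximal payoff; a strategy is optimal at $p_1$ if it achieves $V_\delta(p_1)$. The greedy strategy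 $\sigma_*$: at $p\in I$ choose $\mu_p$; at $p\in J$ choose a two-point splitting $p=a_Iq_I+a_Jq_J$ (posterior $q_I$ w.p. $a_I$, $q_J$ w.p. $a_J$) maximizing $a_I$ subject to $q_I\in I$, $q_J\in\Delta(\Omega)$, $a_I+a_J=1$, $a_I,a_J\ge0$. *)

theory Defs
  imports "HOL-Analysis.Analysis" "HOL-Probability.Probability"
begin

text \<open>Beliefs are vectors in real^'w (Omega = the finite type 'w), Delta(Omega) the unit DeltaOm.\<close>

definition DeltaOm :: "(real^'w::finite) set" where
  "DeltaOm = {p. (\<forall>w. 0 \<le> p $ w) \<and> (\<Sum>w\<in>UNIV. p $ w) = 1}"

definition ip :: "real^'w::finite \<Rightarrow> ('w \<Rightarrow> real) \<Rightarrow> real" where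
  "ip p r = (\<Sum>w\<in>UNIV. p $ w * r w)"

definition setI :: "('w::finite \<Rightarrow> real) \<Rightarrow> (real^'w) set" where
  "setI r = {p \<in> DeltaOm. ip p r \<ge> 0}"

definition setJ :: "('w::finite \<Rightarrow> real) \<Rightarrow> (real^'w) set" where
  "setJ r = DeltaOm - setI r"

text \<open>Transition matrix: row w, column w' is pi(w' | w).\<close>
definition trans_matrix :: "real^'w::finite \<Rightarrow> real \<Rightarrow> real^'w^'w" where
  "trans_matrix m lam = (\<chi> w. \<chi> w'. (1 - lam) * m $ w' + (if w' = w then lam else 0))"

definition irreducible_chain :: "real^'w::finite^'w \<Rightarrow> bool" where
  "irreducible_chain M = (\<forall>i j. (i, j) \<in> {(i, j). 0 < M $ i $ j}\<^sup>*)"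

definition phi :: "real^'w::finite^'w \<Rightarrow> real^'w \<Rightarrow> real^'w" where
  "phi M q = q v* M"

definition Sset :: "real^'w::finite \<Rightarrow> (real^'w) measure set" where
  "Sset p = {\<mu>. sets \<mu> = sets borel \<and> prob_space \<mu> \<and> emeasure \<mu> DeltaOm = 1
                 \<and> (\<integral>q. q \<partial>\<mu>) = p}"

text \<open>Histories of posteriors q_1..q_n (indices 0..n-1).\<close>
definition hist :: "nat \<Rightarrow> (nat \<Rightarrow> real^'w::finite) measure" where
  "hist n = PiM {..<n} (\<lambda>_. borel)"

text \<open>Current belief at stage n+1 (0-indexed stage n) after history h of length n.\<close>
definition belief :: "real^'w::finite^'w \<Rightarrow> real^'w \<Rightarrow> nat \<Rightarrow> (nat \<Rightarrow> real^'w) \<Rightarrow> real^'w" where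
  "belief M p1 n h = (if n = 0 then p1 else phi M (h (n - 1)))"

definition admissible :: "real^'w::finite^'w \<Rightarrow> real^'w \<Rightarrow>
    (nat \<Rightarrow> (nat \<Rightarrow> real^'w) \<Rightarrow> (real^'w) measure) \<Rightarrow> bool" where
  "admissible M p1 \<sigma> = (\<forall>n. \<sigma> n \<in> measurable (hist n) (prob_algebra borel) \<and>
     (\<forall>h\<in>space (hist n). (\<forall>i<n. h i \<in> DeltaOm) \<longrightarrow> \<sigma> n h \<in> Sset (belief M p1 n h)))"

primrec law :: "(nat \<Rightarrow> (nat \<Rightarrow> real^'w::finite) \<Rightarrow> (real^'w) measure) \<Rightarrow> nat
    \<Rightarrow> (nat \<Rightarrow> real^'w) measure" where
  "law \<sigma> 0 = return (hist 0) (\<lambda>_. undefined)"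
| "law \<sigma> (Suc n) = law \<sigma> n \<bind> (\<lambda>h. \<sigma> n h \<bind> (\<lambda>q. return (hist (Suc n)) (h(n := q))))"

text \<open>Expected discounted payoff E[(1-delta) sum_n delta^(n-1) 1{q_n in I}], written
  (by linearity/monotone convergence) as the sum of the stage-wise probabilities.\<close>
definition payoff :: "('w::finite \<Rightarrow> real) \<Rightarrow> real \<Rightarrow>
    (nat \<Rightarrow> (nat \<Rightarrow> real^'w) \<Rightarrow> (real^'w) measure) \<Rightarrow> real" where
  "payoff r \<delta> \<sigma> = (\<Sum>n. (1 - \<delta>) * \<delta> ^ n *
      measure (law \<sigma> (Suc n)) {h \<in> space (hist (Suc n)). h n \<in> setI r})"

definition Vdelta :: "real^'w::finite^'w \<Rightarrow> real^'w \<Rightarrow> ('w \<Rightarrow> real) \<Rightarrow> real \<Rightarrow> real" where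
  "Vdelta M p1 r \<delta> = Sup {payoff r \<delta> \<sigma> | \<sigma>. admissible M p1 \<sigma>}"

definition optimal :: "real^'w::finite^'w \<Rightarrow> real^'w \<Rightarrow> ('w \<Rightarrow> real) \<Rightarrow> real \<Rightarrow>
    (nat \<Rightarrow> (nat \<Rightarrow> real^'w) \<Rightarrow> (real^'w) measure) \<Rightarrow> bool" where
  "optimal M p1 r \<delta> \<sigma> = (admissible M p1 \<sigma> \<and> payoff r \<delta> \<sigma> = Vdelta M p1 r \<delta>)"

definition greedy_choice :: "('w::finite \<Rightarrow> real) \<Rightarrow> real^'w \<Rightarrow> (real^'w) measure \<Rightarrow> bool" where
  "greedy_choice r p \<mu> =
     ((p \<in> setI r \<longrightarrow> \<mu> = return borel p) \<and>
      (p \<in> setJ r \<longrightarrow>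
        (\<exists>aI aJ qI qJ. 0 \<le> aI \<and> 0 \<le> aJ \<and> aI + aJ = 1 \<and> qI \<in> setI r \<and> qJ \<in> DeltaOm \<and>
           p = aI *\<^sub>R qI + aJ *\<^sub>R qJ \<and>
           (\<forall>a' b' q' q''. 0 \<le> a' \<and> 0 \<le> b' \<and> a' + b' = 1 \<and> q' \<in> setI r \<and> q'' \<in> DeltaOm \<and>
               p = a' *\<^sub>R q' + b' *\<^sub>R q'' \<longrightarrow> a' \<le> aI) \<and>
           sets \<mu> = sets borel \<and>
           (\<forall>A\<in>sets borel. emeasure \<mu> A = ennreal (aI * indicator A qI + aJ * indicator A qJ)))))"

definition greedy :: "real^'w::finite^'w \<Rightarrow> real^'w \<Rightarrow> ('w \<Rightarrow> real) \<Rightarrow>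
    (nat \<Rightarrow> (nat \<Rightarrow> real^'w) \<Rightarrow> (real^'w) measure) \<Rightarrow> bool" where
  "greedy M p1 r \<sigma> = (admissible M p1 \<sigma> \<and>
     (\<forall>n. \<forall>h\<in>space (hist n). (\<forall>i<n. h i \<in> DeltaOm) \<longrightarrow>
        greedy_choice r (belief M p1 n h) (\<sigma> n h)))"

end

theory Submission
  imports Defs
begin

lemma Delta_borel: "DeltaOm \<in> sets (borel :: (real^'w::finite) measure)"
  unfolding DeltaOm_def by measurable

lemma setI_borel: "setI r \<in> sets (borel :: (real^'w::finite) measure)"
  unfolding setI_def ip_def DeltaOm_def by measurable

lemma hist_space_ne: "space (hist n :: (nat \<Rightarrow> real^'w::finite) measure) \<noteq> {}"
  unfolding hist_def by (simp add: space_PiM_empty_iff)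

lemma upd_space:
  assumes "h \<in> space (hist n :: (nat \<Rightarrow> real^'w::finite) measure)"
  shows "h(n := q) \<in> space (hist (Suc n))"
  using assms unfolding hist_def by (auto simp: space_PiM PiE_def extensional_def)

lemma upd_meas:
  assumes "h \<in> space (hist n :: (nat \<Rightarrow> real^'w::finite) measure)"
  shows "(\<lambda>q. return (hist (Suc n)) (h(n := q))) \<in> measurable borel (subprob_algebra (hist (Suc n)))"
proof (rule measurable_compose[OF _ return_measurable])
  show "(\<lambda>q::real^'w. h(n := q)) \<in> measurable borel (hist (Suc n))"
    unfolding hist_def
    by (rule measurable_fun_upd[where J="{..<n}"]) (use assms in \<open>auto simp: hist_def\<close>)
qed

lemma kernel_meas:
  assumes "\<sigma> n \<in> measurable (hist n) (prob_algebra (borel :: (real^'w::finite) measure))"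
  shows "(\<lambda>h. \<sigma> n h \<bind> (\<lambda>q. return (hist (Suc n)) (h(n := q)))) \<in> measurable (hist n) (subprob_algebra (hist (Suc n)))"
proof (rule measurable_bind')
  show "\<sigma> n \<in> measurable (hist n) (subprob_algebra borel)" using assms by (rule measurable_prob_algebraD)
  have fu: "(\<lambda>x::(nat \<Rightarrow> real^'w) \<times> (real^'w). (fst x)(n := snd x)) \<in> measurable (hist n \<Otimes>\<^sub>M borel) (hist (Suc n))"
    unfolding hist_def by (rule measurable_fun_upd[where J="{..<n}"]) auto
  show "(\<lambda>(h::nat \<Rightarrow> real^'w, q::real^'w). return (hist (Suc n)) (h(n:=q))) \<in> measurable (hist n \<Otimes>\<^sub>M borel) (subprob_algebra (hist (Suc n)))"
    unfolding split_beta' apply (rule measurable_compose[OF fu]) by (rule return_measurable)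
qed

lemma sets_law:
  assumes "\<forall>n. \<sigma> n \<in> measurable (hist n) (prob_algebra (borel :: (real^'w::finite) measure))"
  shows "sets (law \<sigma> n) = sets (hist n)"
proof (induction n)
  case 0 show ?case by simp
next
  case (Suc n)
  have "(\<lambda>h. \<sigma> n h \<bind> (\<lambda>q. return (hist (Suc n)) (h(n := q)))) \<in> measurable (law \<sigma> n) (subprob_algebra (hist (Suc n)))"
    using kernel_meas[of \<sigma> n] assms measurable_cong_sets[OF Suc refl] by auto
  moreover have "space (law \<sigma> n) \<noteq> {}" using sets_eq_imp_space_eq[OF Suc] hist_space_ne by auto
  ultimately show ?case by (simp add: sets_bind_measurable)
qed

lemma kernel_meas_law:
  assumes "\<forall>n. \<sigma> n \<in> measurable (hist n) (prob_algebra (borel :: (real^'w::finite) measure))"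
  shows "(\<lambda>h. \<sigma> n h \<bind> (\<lambda>q. return (hist (Suc n)) (h(n := q)))) \<in> measurable (law \<sigma> n) (subprob_algebra (hist (Suc n)))"
  using kernel_meas[of \<sigma> n] assms measurable_cong_sets[OF sets_law[OF assms] refl] by auto

lemma space_law:
  assumes "\<forall>n. \<sigma> n \<in> measurable (hist n) (prob_algebra (borel :: (real^'w::finite) measure))"
  shows "space (law \<sigma> n) = space (hist n)"
  using sets_eq_imp_space_eq[OF sets_law[OF assms]] .

lemma law_AE:
  fixes \<sigma> :: "nat \<Rightarrow> (nat \<Rightarrow> real^'w::finite) \<Rightarrow> (real^'w) measure"
  assumes meas: "\<forall>n. \<sigma> n \<in> measurable (hist n) (prob_algebra borel)"
    and P: "P \<in> sets borel"
    and step: "\<And>n h. h \<in> space (hist n) \<Longrightarrow> (\<forall>i<n. h i \<in> P) \<Longrightarrow> AE q in \<sigma> n h. q \<in> P"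
  shows "AE h in law \<sigma> n. \<forall>i<n. h i \<in> P"
proof (induction n)
  case 0 show ?case by simp
next
  case (Suc n)
  have pr: "Measurable.pred (hist (Suc n)) (\<lambda>h. \<forall>i<Suc n. h i \<in> P)"
    unfolding hist_def using P by measurable
  have "AE h in law \<sigma> n. AE y in \<sigma> n h \<bind> (\<lambda>q. return (hist (Suc n)) (h(n := q))). \<forall>i<Suc n. y i \<in> P"
    using Suc AE_space
  proof eventually_elim
    case (elim h)
    note hh = elim
    then have h: "h \<in> space (hist n)" using space_law[OF meas] by simp
    have "AE q in \<sigma> n h. AE y in return (hist (Suc n)) (h(n := q)). \<forall>i<Suc n. y i \<in> P"
      using step[OF h hh(1)]
    proof eventually_elim
      case (elim q)
      have "\<forall>i<Suc n. (h(n := q)) i \<in> P" using elim hh by (auto simp: less_Suc_eq)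
      then show ?case using AE_return[OF upd_space[OF h] pr] by blast
    qed
    moreover have ss: "sets (\<sigma> n h) = sets borel"
      using meas h measurable_space[of "\<sigma> n" "hist n" "prob_algebra borel" h]
      by (auto simp: space_prob_algebra)
    have um: "(\<lambda>q. return (hist (Suc n)) (h(n := q))) \<in> measurable (\<sigma> n h) (subprob_algebra (hist (Suc n)))"
      by (subst measurable_cong_sets[OF ss refl]) (rule upd_meas[OF h])
    ultimately show ?case
      using AE_bind[OF um pr] by auto
  qed
  then show ?case
    unfolding law.simps AE_bind[OF kernel_meas_law[OF meas] pr] .
qed

lemma ip_inner: "ip q v = q \<bullet> (\<chi> w. v w)"
  by (simp add: ip_def inner_vec_def)

lemma phi_eq:
  "phi (trans_matrix m lam) q = ((1-lam) * (\<Sum>w\<in>UNIV. q$w)) *\<^sub>R m + lam *\<^sub>R (q :: real^'w::finite)"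
proof -
  have "(\<Sum>i\<in>UNIV. ((1 - lam) * m $ j + (if j = i then lam else 0)) * q $ i)
        = (1-lam) * (\<Sum>w\<in>UNIV. q$w) * m$j + lam * q$j" for j
  proof -
    have "(\<Sum>i\<in>UNIV. ((1 - lam) * m $ j + (if j = i then lam else 0)) * q $ i)
        = (\<Sum>i\<in>UNIV. (1 - lam) * m $ j * q$i) + (\<Sum>i\<in>UNIV. (if j = i then lam * q$i else 0))"
      by (subst sum.distrib[symmetric]) (rule sum.cong, auto simp: algebra_simps)
    also have "\<dots> = (1-lam) * (\<Sum>w\<in>UNIV. q$w) * m$j + lam * q$j"
      by (simp add: sum_distrib_left[symmetric] sum_distrib_right[symmetric] mult.commute mult.left_commute)
    finally show ?thesis .
  qed
  then show ?thesis
    unfolding phi_def vector_matrix_mult_def trans_matrix_def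
    by (simp add: vec_eq_iff mult.commute)
qed

lemma Delta_sum: "p \<in> DeltaOm \<Longrightarrow> (\<Sum>w\<in>UNIV. p$w) = 1"
  by (simp add: DeltaOm_def)

lemma Delta_nonneg: "p \<in> DeltaOm \<Longrightarrow> 0 \<le> p$w"
  by (simp add: DeltaOm_def)

lemma phi_Delta:
  assumes "m \<in> DeltaOm" "q \<in> DeltaOm" "0 \<le> lam" "lam \<le> 1"
  shows "phi (trans_matrix m lam) q = (1-lam) *\<^sub>R m + lam *\<^sub>R q"
  using phi_eq[of m lam q] Delta_sum[OF assms(2)] by simp

lemma conv_Delta:
  assumes "p \<in> DeltaOm" "q \<in> DeltaOm" "0 \<le> t" "t \<le> 1"
  shows "(1-t) *\<^sub>R p + t *\<^sub>R q \<in> DeltaOm"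
proof -
  have "(\<Sum>w\<in>UNIV. (1-t) * p$w + t * q$w) = (1-t) * (\<Sum>w\<in>UNIV. p$w) + t * (\<Sum>w\<in>UNIV. q$w)"
    by (simp add: sum.distrib sum_distrib_left)
  then show ?thesis using assms unfolding DeltaOm_def by auto
qed

lemma ip_add: "ip (a *\<^sub>R p + b *\<^sub>R q) v = a * ip p v + b * ip q v"
  by (simp add: ip_def sum.distrib sum_distrib_left algebra_simps)

lemma ip_nonneg: "p \<in> DeltaOm \<Longrightarrow> (\<forall>w. 0 \<le> v w) \<Longrightarrow> 0 \<le> ip p v"
  unfolding ip_def by (intro sum_nonneg) (simp add: Delta_nonneg)

lemma Sset_AE:
  assumes mu: "\<mu> \<in> Sset p"
  shows "AE q in \<mu>. q \<in> DeltaOm"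
proof -
  from mu have ps: "prob_space \<mu>" and e: "emeasure \<mu> DeltaOm = 1" by (auto simp: Sset_def)
  then have "measure \<mu> DeltaOm = 1" by (simp add: measure_def)
  then show ?thesis using prob_space.AE_prob_1[OF ps] by auto
qed

lemma Sset_int:
  assumes mu: "\<mu> \<in> Sset p" and p: "p \<in> DeltaOm" and v: "\<forall>w. 0 \<le> v w"
  shows "(\<integral>\<^sup>+q. ennreal (ip q v) \<partial>\<mu>) = ennreal (ip p v)"
proof -
  from mu have int: "(\<integral>q. q \<partial>\<mu>) = p" by (simp add: Sset_def)
  have "integrable \<mu> (\<lambda>q. q)"
  proof (rule ccontr)
    assume "\<not> integrable \<mu> (\<lambda>q. q)"
    then have "p = 0" using int not_integrable_integral_eq by metis
    then show False using Delta_sum[OF p] by simp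
  qed
  then have i2: "integrable \<mu> (\<lambda>q. ip q v)" unfolding ip_inner by auto
  have "(\<integral>q. ip q v \<partial>\<mu>) = ip p v"
    unfolding ip_inner using \<open>integrable \<mu> (\<lambda>q. q)\<close> int by simp
  moreover have "AE q in \<mu>. 0 \<le> ip q v"
    using Sset_AE[OF mu] by eventually_elim (rule ip_nonneg[OF _ v])
  ultimately show ?thesis using nn_integral_eq_integral[OF i2] by simp
qed

lemma ip_shift: "ip q (\<lambda>w. a + b * v w) = a * (\<Sum>w\<in>UNIV. q$w) + b * ip q v"
  by (simp add: ip_def sum.distrib sum_distrib_left algebra_simps)

lemma sig_sets:
  assumes "s \<in> measurable (hist n) (prob_algebra (borel :: (real^'w::finite) measure))" "h \<in> space (hist n)"
  shows "sets (s h) = sets borel"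
  using assms measurable_space[of s "hist n" "prob_algebra borel" h]
  by (auto simp: space_prob_algebra)

lemma um_meas:
  assumes "s \<in> measurable (hist n) (prob_algebra (borel :: (real^'w::finite) measure))" "h \<in> space (hist n)"
  shows "(\<lambda>q. return (hist (Suc n)) (h(n := q))) \<in> measurable (s h) (subprob_algebra (hist (Suc n)))"
  by (subst measurable_cong_sets[OF sig_sets[OF assms] refl]) (rule upd_meas[OF assms(2)])

lemma adm_meas: "admissible (M :: real^'w::finite^'w) p1 \<sigma> \<Longrightarrow> \<forall>n. \<sigma> n \<in> measurable (hist n) (prob_algebra (borel :: (real^'w) measure))"
  by (simp add: admissible_def)

lemma belief_Delta:
  assumes "m \<in> DeltaOm" "0 \<le> lam" "lam \<le> 1" "\<forall>i<n. h i \<in> DeltaOm"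
  shows "belief (trans_matrix m lam) m n h \<in> DeltaOm"
proof (cases n)
  case 0 then show ?thesis using assms by (simp add: belief_def)
next
  case (Suc k)
  then have "h k \<in> DeltaOm" using assms by auto
  then show ?thesis using Suc assms by (simp add: belief_def phi_Delta conv_Delta)
qed

lemma law_Delta:
  fixes m :: "real^'w::finite"
  assumes adm: "admissible (trans_matrix m lam) m \<sigma>" and m: "m \<in> DeltaOm" and l: "0 \<le> lam" "lam \<le> 1"
  shows "AE h in law \<sigma> n. \<forall>i<n. h i \<in> DeltaOm"
proof (rule law_AE[OF adm_meas[OF adm] Delta_borel])
  fix n and h :: "nat \<Rightarrow> real^'w" assume h: "h \<in> space (hist n)" "\<forall>i<n. h i \<in> DeltaOm"
  then have "\<sigma> n h \<in> Sset (belief (trans_matrix m lam) m n h)" using adm by (auto simp: admissible_def)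
  then show "AE q in \<sigma> n h. q \<in> DeltaOm" by (rule Sset_AE)
qed

lemma f_meas: "(\<lambda>y::nat \<Rightarrow> real^'w::finite. ennreal (ip (y n) v)) \<in> borel_measurable (hist k)" if "n < k"
proof -
  have a: "(\<lambda>y::nat \<Rightarrow> real^'w. y n) \<in> measurable (hist k) borel"
    unfolding hist_def using that by (intro measurable_component_singleton) auto
  have b: "(\<lambda>q::real^'w. ennreal (ip q v)) \<in> borel_measurable borel"
    unfolding ip_def by measurable
  show ?thesis using measurable_compose[OF a b] .
qed

lemma bind_step:
  assumes adm: "admissible (trans_matrix m lam) m \<sigma>" and m: "m \<in> DeltaOm" and l: "0 \<le> lam" "lam \<le> 1"
    and v: "\<forall>w. 0 \<le> v w"
  shows "(\<integral>\<^sup>+h. ennreal (ip (h n) v) \<partial>law \<sigma> (Suc n))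
       = (\<integral>\<^sup>+h. ennreal (ip (belief (trans_matrix m lam) m n h) v) \<partial>law \<sigma> n)"
proof -
  note meas = adm_meas[OF adm]
  have "(\<integral>\<^sup>+h. ennreal (ip (h n) v) \<partial>law \<sigma> (Suc n))
      = (\<integral>\<^sup>+h. \<integral>\<^sup>+y. ennreal (ip (y n) v) \<partial>(\<sigma> n h \<bind> (\<lambda>q. return (hist (Suc n)) (h(n := q)))) \<partial>law \<sigma> n)"
    unfolding law.simps by (rule nn_integral_bind[OF f_meas kernel_meas_law[OF meas]]) simp
  also have "\<dots> = (\<integral>\<^sup>+h. ennreal (ip (belief (trans_matrix m lam) m n h) v) \<partial>law \<sigma> n)"
  proof (rule nn_integral_cong_AE)
    show "AE h in law \<sigma> n. (\<integral>\<^sup>+y. ennreal (ip (y n) v) \<partial>(\<sigma> n h \<bind> (\<lambda>q. return (hist (Suc n)) (h(n := q)))))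
        = ennreal (ip (belief (trans_matrix m lam) m n h) v)"
      using law_Delta[OF adm m l, of n] AE_space
    proof eventually_elim
      case (elim h)
      then have h: "h \<in> space (hist n)" using space_law[OF meas] by simp
      have "(\<integral>\<^sup>+y. ennreal (ip (y n) v) \<partial>(\<sigma> n h \<bind> (\<lambda>q. return (hist (Suc n)) (h(n := q)))))
          = (\<integral>\<^sup>+q. \<integral>\<^sup>+y. ennreal (ip (y n) v) \<partial>return (hist (Suc n)) (h(n := q)) \<partial>\<sigma> n h)"
        by (rule nn_integral_bind[OF f_meas um_meas[OF meas[rule_format] h]]) simp
      also have "\<dots> = (\<integral>\<^sup>+q. ennreal (ip q v) \<partial>\<sigma> n h)"
        by (rule nn_integral_cong) (simp add: nn_integral_return[OF upd_space[OF h] f_meas])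
      also have "\<dots> = ennreal (ip (belief (trans_matrix m lam) m n h) v)"
        using adm h elim(1) belief_Delta[OF m l elim(1)] v
        by (intro Sset_int) (auto simp: admissible_def)
      finally show ?case .
    qed
  qed
  finally show ?thesis .
qed

lemma law_exp:
  assumes adm: "admissible (trans_matrix m lam) m \<sigma>" and m: "m \<in> DeltaOm" and l: "0 \<le> lam" "lam \<le> 1"
  shows "\<forall>v. (\<forall>w. 0 \<le> v w) \<longrightarrow> (\<integral>\<^sup>+h. ennreal (ip (h n) v) \<partial>law \<sigma> (Suc n)) = ennreal (ip m v)"
proof (induction n)
  case 0
  show ?case
  proof (intro allI impI)
    fix v :: "'a \<Rightarrow> real" assume v: "\<forall>w. 0 \<le> v w"
    have sp: "(\<lambda>_. undefined) \<in> space (hist 0 :: (nat \<Rightarrow> real^'a) measure)"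
      by (simp add: hist_def space_PiM_empty)
    show "(\<integral>\<^sup>+h. ennreal (ip (h 0) v) \<partial>law \<sigma> (Suc 0)) = ennreal (ip m v)"
      using bind_step[OF adm m l v, of 0] nn_integral_return[OF sp, of "\<lambda>_. ennreal (ip m v)"]
      by (simp add: belief_def)
  qed
next
  case (Suc n)
  show ?case
  proof (intro allI impI)
    fix v :: "'a \<Rightarrow> real" assume v: "\<forall>w. 0 \<le> v w"
    define v' where "v' = (\<lambda>w. (1-lam) * ip m v + lam * v w)"
    have v': "\<forall>w. 0 \<le> v' w" unfolding v'_def using l v ip_nonneg[OF m v] by auto
    have "(\<integral>\<^sup>+h. ennreal (ip (h (Suc n)) v) \<partial>law \<sigma> (Suc (Suc n)))
        = (\<integral>\<^sup>+h. ennreal (ip (belief (trans_matrix m lam) m (Suc n) h) v) \<partial>law \<sigma> (Suc n))"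
      by (rule bind_step[OF adm m l v])
    also have "\<dots> = (\<integral>\<^sup>+h. ennreal (ip (h n) v') \<partial>law \<sigma> (Suc n))"
    proof (rule nn_integral_cong_AE)
      show "AE h in law \<sigma> (Suc n). ennreal (ip (belief (trans_matrix m lam) m (Suc n) h) v) = ennreal (ip (h n) v')"
        using law_Delta[OF adm m l, of "Suc n"]
      proof eventually_elim
        case (elim h)
        then have hn: "h n \<in> DeltaOm" by auto
        show ?case
          using hn by (simp add: belief_def phi_Delta[OF m hn l] ip_add v'_def ip_shift Delta_sum)
      qed
    qed
    also have "\<dots> = ennreal (ip m v')" using Suc v' by blast
    also have "\<dots> = ennreal (ip m v)" by (simp only: v'_def ip_shift Delta_sum[OF m]) (simp add: algebra_simps)
    finally show "(\<integral>\<^sup>+h. ennreal (ip (h (Suc n)) v) \<partial>law \<sigma> (Suc (Suc n))) = ennreal (ip m v)" .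
  qed
qed

lemma stage_meas: "{h \<in> space (hist (Suc n)). h n \<in> setI r} \<in> sets (hist (Suc n) :: (nat \<Rightarrow> real^'w::finite) measure)"
proof -
  have a: "(\<lambda>y::nat \<Rightarrow> real^'w. y n) \<in> measurable (hist (Suc n)) borel"
    unfolding hist_def by (intro measurable_component_singleton) auto
  show ?thesis using measurable_sets[OF a setI_borel] by (simp add: vimage_def Int_def conj_commute)
qed

lemma stage_le:
  fixes m :: "real^'w::finite"
  assumes adm: "admissible (trans_matrix m lam) m \<sigma>" and m: "m \<in> DeltaOm" and l: "0 \<le> lam" "lam \<le> 1"
    and g: "\<forall>w. 0 \<le> g w" and gI: "\<forall>q\<in>setI r. 1 \<le> ip q g"
  shows "measure (law \<sigma> (Suc n)) {h \<in> space (hist (Suc n)). h n \<in> setI r} \<le> ip m g"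
proof -
  let ?A = "{h \<in> space (hist (Suc n)). h n \<in> setI r}"
  have As: "?A \<in> sets (law \<sigma> (Suc n))" using stage_meas sets_law[OF adm_meas[OF adm]] by blast
  have "emeasure (law \<sigma> (Suc n)) ?A = (\<integral>\<^sup>+h. indicator ?A h \<partial>law \<sigma> (Suc n))"
    using nn_integral_indicator[OF As] by simp
  also have "\<dots> \<le> (\<integral>\<^sup>+h. ennreal (ip (h n) g) \<partial>law \<sigma> (Suc n))"
  proof (rule nn_integral_mono_AE)
    show "AE h in law \<sigma> (Suc n). indicator ?A h \<le> ennreal (ip (h n) g)"
      using law_Delta[OF adm m l, of "Suc n"]
    proof eventually_elim
      case (elim h)
      show ?case
      proof (cases "h \<in> ?A")
        case True then show ?thesis using gI by auto
      next
        case False then show ?thesis by simp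
      qed
    qed
  qed
  also have "\<dots> = ennreal (ip m g)" using law_exp[OF adm m l, of n] g by blast
  finally show ?thesis
    unfolding measure_def using ip_nonneg[OF m g] by (intro enn2real_leI) auto
qed

lemma stage_eq:
  fixes m :: "real^'w::finite"
  assumes adm: "admissible (trans_matrix m lam) m \<sigma>" and m: "m \<in> DeltaOm" and l: "0 \<le> lam" "lam \<le> 1"
    and g: "\<forall>w. 0 \<le> g w"
    and inv: "AE h in law \<sigma> (Suc n). indicator (setI r) (h n) = ip (h n) g"
  shows "measure (law \<sigma> (Suc n)) {h \<in> space (hist (Suc n)). h n \<in> setI r} = ip m g"
proof -
  let ?A = "{h \<in> space (hist (Suc n)). h n \<in> setI r}"
  have As: "?A \<in> sets (law \<sigma> (Suc n))" using stage_meas sets_law[OF adm_meas[OF adm]] by blast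
  have "emeasure (law \<sigma> (Suc n)) ?A = (\<integral>\<^sup>+h. indicator ?A h \<partial>law \<sigma> (Suc n))"
    using nn_integral_indicator[OF As] by simp
  also have "\<dots> = (\<integral>\<^sup>+h. ennreal (ip (h n) g) \<partial>law \<sigma> (Suc n))"
  proof (rule nn_integral_cong_AE)
    show "AE h in law \<sigma> (Suc n). indicator ?A h = ennreal (ip (h n) g)"
      using inv AE_space
    proof eventually_elim
      case (elim h)
      have "h \<in> space (hist (Suc n))" using elim(2) unfolding space_law[OF adm_meas[OF adm]] .
      then show ?case using elim(1)[symmetric] by (auto simp: indicator_def)
    qed
  qed
  also have "\<dots> = ennreal (ip m g)" using law_exp[OF adm m l, of n] g by blast
  finally show ?thesis
    unfolding measure_def using ip_nonneg[OF m g] by simp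
qed

lemma geo_sums: "0 \<le> (\<delta>::real) \<Longrightarrow> \<delta> < 1 \<Longrightarrow> (\<lambda>n. (1-\<delta>) * \<delta>^n * G) sums G"
proof -
  assume d: "0 \<le> \<delta>" "\<delta> < 1"
  have "(\<lambda>n. \<delta>^n) sums (1/(1-\<delta>))" using d by (intro geometric_sums) auto
  then have "(\<lambda>n. ((1-\<delta>) * G) * \<delta>^n) sums (((1-\<delta>) * G) * (1/(1-\<delta>)))" by (rule sums_mult)
  moreover have "((1-\<delta>) * G) * (1/(1-\<delta>)) = G" using d by simp
  ultimately show ?thesis by (simp add: algebra_simps)
qed

lemma geo_le:
  assumes d: "0 \<le> (\<delta>::real)" "\<delta> < 1" and a: "\<And>n. 0 \<le> a n" "\<And>n. a n \<le> G"
  shows "(\<Sum>n. (1-\<delta>) * \<delta>^n * a n) \<le> G"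
proof -
  have s: "summable (\<lambda>n. (1-\<delta>) * \<delta>^n * G)" using geo_sums[OF d] sums_summable by blast
  have le: "\<And>n. (1-\<delta>) * \<delta>^n * a n \<le> (1-\<delta>) * \<delta>^n * G"
    by (rule mult_left_mono[OF a(2)]) (use d in auto)
  have s2: "summable (\<lambda>n. (1-\<delta>) * \<delta>^n * a n)"
  proof (rule summable_comparison_test'[OF s])
    fix n :: nat
    have "0 \<le> (1-\<delta>) * \<delta>^n * a n" using d a by simp
    then show "norm ((1-\<delta>) * \<delta>^n * a n) \<le> (1-\<delta>) * \<delta>^n * G" using le[of n] by simp
  qed
  have "(\<Sum>n. (1-\<delta>) * \<delta>^n * a n) \<le> (\<Sum>n. (1-\<delta>) * \<delta>^n * G)"
    by (rule suminf_le[OF le s2 s])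
  also have "\<dots> = G" using geo_sums[OF d] sums_unique by metis
  finally show ?thesis .
qed

lemma main_opt:
  fixes m :: "real^'w::finite"
  assumes m: "m \<in> DeltaOm" and l: "0 \<le> lam" "lam \<le> 1" and d: "0 \<le> \<delta>" "\<delta> < 1"
    and g: "\<forall>w. 0 \<le> g w" and gI: "\<forall>q\<in>setI r. 1 \<le> ip q g"
    and adm: "admissible (trans_matrix m lam) m \<sigma>"
    and inv: "\<forall>n. AE h in law \<sigma> (Suc n). indicator (setI r) (h n) = ip (h n) g"
  shows "optimal (trans_matrix m lam) m r \<delta> \<sigma>"
proof -
  have "(\<lambda>n. (1 - \<delta>) * \<delta> ^ n * measure (law \<sigma> (Suc n)) {h \<in> space (hist (Suc n)). h n \<in> setI r})
       = (\<lambda>n. (1 - \<delta>) * \<delta> ^ n * ip m g)"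
    by (rule ext) (simp only: stage_eq[OF adm m l g inv[rule_format]])
  then have p0: "payoff r \<delta> \<sigma> = ip m g"
    unfolding payoff_def using sums_unique[OF geo_sums[OF d, of "ip m g"]] by simp
  have ple: "payoff r \<delta> \<tau> \<le> ip m g" if "admissible (trans_matrix m lam) m \<tau>" for \<tau>
    unfolding payoff_def
    by (rule geo_le[OF d measure_nonneg stage_le[OF that m l g gI]])
  have "Sup {payoff r \<delta> \<sigma> | \<sigma>. admissible (trans_matrix m lam) m \<sigma>} = ip m g"
  proof (rule cSup_eq_maximum)
    show "ip m g \<in> {payoff r \<delta> \<sigma> | \<sigma>. admissible (trans_matrix m lam) m \<sigma>}"
      using adm p0 by force
    fix x assume "x \<in> {payoff r \<delta> \<sigma> | \<sigma>. admissible (trans_matrix m lam) m \<sigma>}"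
    then obtain \<tau> where "admissible (trans_matrix m lam) m \<tau>" "x = payoff r \<delta> \<tau>" by blast
    then show "x \<le> ip m g" using ple by blast
  qed
  then have "Vdelta (trans_matrix m lam) m r \<delta> = ip m g" unfolding Vdelta_def .
  then show ?thesis using adm p0 by (simp add: optimal_def)
qed

definition gvec :: "('w::finite \<Rightarrow> real) \<Rightarrow> real \<Rightarrow> 'w \<Rightarrow> real" where
  "gvec r c w = max 0 (1 - r w / c)"
definition S1 :: "('w::finite \<Rightarrow> real) \<Rightarrow> real \<Rightarrow> real^'w \<Rightarrow> real" where
  "S1 r c p = (\<Sum>w\<in>UNIV. if c < r w then p$w * r w else 0)"
definition S2 :: "('w::finite \<Rightarrow> real) \<Rightarrow> real \<Rightarrow> real^'w \<Rightarrow> real" where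
  "S2 r c p = (\<Sum>w\<in>UNIV. if c \<le> r w then p$w * r w else 0)"
definition Zs :: "('w::finite \<Rightarrow> real) \<Rightarrow> real \<Rightarrow> real^'w \<Rightarrow> real" where
  "Zs r c p = (\<Sum>w\<in>UNIV. if r w = c then p$w else 0)"
definition Pc :: "('w::finite \<Rightarrow> real) \<Rightarrow> real \<Rightarrow> real^'w \<Rightarrow> real" where
  "Pc r c p = (\<Sum>w\<in>UNIV. if c < r w then p$w else 0)"
definition Kset :: "('w::finite \<Rightarrow> real) \<Rightarrow> real \<Rightarrow> (real^'w) set" where
  "Kset r c = {p \<in> DeltaOm. 0 \<le> S1 r c p \<and> S2 r c p \<le> 0}"

lemma gvec_nonneg: "\<forall>w. 0 \<le> gvec r c w"
  by (simp add: gvec_def)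

lemma S2_eq: "S2 r c p = S1 r c p + c * Zs r c p"
  unfolding S1_def S2_def Zs_def sum_distrib_left sum.distrib[symmetric]
  by (rule sum.cong) auto

lemma gvec_pos: "c < 0 \<Longrightarrow> c < r w \<Longrightarrow> gvec r c w = 1 - r w / c"
proof -
  assume c: "c < 0" "c < r w"
  have "r w / c < 1" using c by (simp add: divide_less_eq)
  then show ?thesis by (simp add: gvec_def)
qed

lemma gvec_zero: "c < 0 \<Longrightarrow> r w \<le> c \<Longrightarrow> gvec r c w = 0"
proof -
  assume c: "c < 0" "r w \<le> c"
  have "1 \<le> r w / c" using c by (simp add: le_divide_eq)
  then show ?thesis by (simp add: gvec_def)
qed

lemma ip_g: "c < 0 \<Longrightarrow> ip p (gvec r c) = Pc r c p - S1 r c p / c"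
proof -
  assume c: "c < 0"
  have "p$w * gvec r c w = (if c < r w then p$w else 0) - (if c < r w then p$w * r w else 0) / c" for w
  proof (cases "c < r w")
    case True
    then have g: "gvec r c w = 1 - r w / c" using gvec_pos[of c r w] c by simp
    show ?thesis using True c by (simp add: g field_simps)
  next
    case False then show ?thesis using gvec_zero[OF c, of r w] by simp
  qed
  then show ?thesis unfolding ip_def Pc_def S1_def
    by (simp add: sum_subtractf sum_divide_distrib)
qed

lemma Delta_split: "(\<Sum>w\<in>UNIV. p$w) = Pc r c p + Zs r c p + (\<Sum>w\<in>UNIV. if r w < c then p$w else 0)"
  unfolding Pc_def Zs_def sum.distrib[symmetric] by (rule sum.cong) auto

lemma ip_r_split: "ip p r = S1 r c p + c * Zs r c p + (\<Sum>w\<in>UNIV. if r w < c then p$w * r w else 0)"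
  unfolding ip_def S1_def Zs_def sum_distrib_left sum.distrib[symmetric] by (rule sum.cong) auto

lemma gI_bound:
  assumes c: "c < 0" and q: "q \<in> setI r"
  shows "1 \<le> ip q (gvec r c)"
proof -
  have qD: "q \<in> DeltaOm" and qr: "0 \<le> ip q r" using q by (auto simp: setI_def)
  have "ip q (\<lambda>w. 1 + (- 1 / c) * r w) \<le> ip q (gvec r c)"
    unfolding ip_def using Delta_nonneg[OF qD]
    by (intro sum_mono mult_left_mono) (auto simp: gvec_def)
  moreover have "ip q (\<lambda>w. 1 + (- 1 / c) * r w) = 1 + (- 1 / c) * ip q r"
    using ip_shift[of q 1 "-1/c" r] Delta_sum[OF qD] by simp
  moreover have "0 \<le> (- 1 / c) * ip q r" using c qr by (intro mult_nonneg_nonneg) auto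
  ultimately show ?thesis by linarith
qed

lemma K_x:
  assumes c: "c < 0" and p: "p \<in> Kset r c"
  shows "\<exists>x::real^'w::finite. (\<forall>w. 0 \<le> x$w \<and> x$w \<le> p$w) \<and> 0 \<le> ip x r \<and> (\<Sum>w\<in>UNIV. x$w) = ip p (gvec r c)"
proof -
  have pD: "p \<in> DeltaOm" and A: "0 \<le> S1 r c p" and B: "S2 r c p \<le> 0" using p by (auto simp: Kset_def)
  define Z where "Z = Zs r c p"
  have Zn: "0 \<le> Z" unfolding Z_def Zs_def using Delta_nonneg[OF pD] by (intro sum_nonneg) auto
  have BA: "S2 r c p = S1 r c p + c * Z" unfolding Z_def by (rule S2_eq)
  define \<theta> where "\<theta> = (if Z = 0 then 0 else S1 r c p / (- c * Z))"
  have th: "\<theta> * Z = - S1 r c p / c" "0 \<le> \<theta>" "\<theta> \<le> 1"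
  proof -
    show "\<theta> * Z = - S1 r c p / c"
    proof (cases "Z = 0")
      case True then have "S1 r c p = 0" using A B BA by simp
      then show ?thesis using True by (simp add: \<theta>_def)
    next
      case False then show ?thesis using c by (simp add: \<theta>_def field_simps)
    qed
    show "0 \<le> \<theta>"
    proof (cases "Z = 0")
      case True then show ?thesis by (simp add: \<theta>_def)
    next
      case False
      then have "0 < - c * Z" using c Zn by (intro mult_pos_pos) auto
      then show ?thesis using A False by (simp add: \<theta>_def divide_le_0_iff)
    qed
    show "\<theta> \<le> 1"
    proof (cases "Z = 0")
      case True then show ?thesis by (simp add: \<theta>_def)
    next
      case False
      then have "0 < - c * Z" using c Zn by (intro mult_pos_pos) auto
      moreover have "S1 r c p \<le> - c * Z" using B BA by simp
      ultimately have "S1 r c p / (- c * Z) \<le> 1" by (metis mult_1 pos_divide_le_eq)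
      then show ?thesis using False by (simp add: \<theta>_def)
    qed
  qed
  define x :: "real^'w" where "x = (\<chi> w. if c < r w then p$w else if r w = c then \<theta> * p$w else 0)"
  have x1: "\<forall>w. 0 \<le> x$w \<and> x$w \<le> p$w"
    using th Delta_nonneg[OF pD] by (auto simp: x_def mult_left_le_one_le mult_nonneg_nonneg)
  have "ip x r = S1 r c p + \<theta> * c * Z"
    unfolding ip_def S1_def Z_def Zs_def sum_distrib_left sum.distrib[symmetric]
    by (rule sum.cong) (auto simp: x_def)
  also have "\<dots> = S1 r c p + c * (\<theta> * Z)" by simp
  also have "\<dots> = 0" using th(1) c by simp
  finally have x2: "0 \<le> ip x r" by simp
  have "(\<Sum>w\<in>UNIV. x$w) = Pc r c p + \<theta> * Z"
    unfolding Pc_def Z_def Zs_def sum_distrib_left sum.distrib[symmetric]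
    by (rule sum.cong) (auto simp: x_def)
  also have "\<dots> = ip p (gvec r c)" using th(1) ip_g[OF c, of p r] by simp
  finally show ?thesis using x1 x2 by blast
qed

lemma S1_lin: "S1 r c (a *\<^sub>R p + b *\<^sub>R q) = a * S1 r c p + b * S1 r c q"
  unfolding S1_def sum_distrib_left sum.distrib[symmetric] by (rule sum.cong) (auto simp: algebra_simps)

lemma S2_lin: "S2 r c (a *\<^sub>R p + b *\<^sub>R q) = a * S2 r c p + b * S2 r c q"
  unfolding S2_def sum_distrib_left sum.distrib[symmetric] by (rule sum.cong) (auto simp: algebra_simps)

lemma K_conv:
  assumes "p \<in> Kset r c" "q \<in> Kset r c" "0 \<le> t" "t \<le> 1"
  shows "(1-t) *\<^sub>R p + t *\<^sub>R q \<in> Kset r c"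
proof -
  have D: "(1-t) *\<^sub>R p + t *\<^sub>R q \<in> DeltaOm" using assms conv_Delta by (auto simp: Kset_def)
  have "0 \<le> (1-t) * S1 r c p + t * S1 r c q" using assms by (auto simp: Kset_def)
  moreover have "(1-t) * S2 r c p + t * S2 r c q \<le> 0" using assms
    by (auto simp: Kset_def intro!: add_nonpos_nonpos mult_nonneg_nonpos)
  ultimately show ?thesis using D by (simp add: Kset_def S1_lin S2_lin)
qed

lemma K_of_I:
  assumes c: "c < 0" and q: "q \<in> setI r" and g1: "ip q (gvec r c) = 1"
  shows "q \<in> Kset r c"
proof -
  have qD: "q \<in> DeltaOm" and qr: "0 \<le> ip q r" using q by (auto simp: setI_def)
  define L where "L = (\<Sum>w\<in>UNIV. if r w < c then q$w else 0)"
  define R where "R = (\<Sum>w\<in>UNIV. if r w < c then q$w * r w else 0)"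
  have "Pc r c q - S1 r c q / c = Pc r c q + Zs r c q + L"
    using ip_g[OF c, of q r] g1 Delta_split[of q r c] Delta_sum[OF qD] by (simp add: L_def)
  then have "- S1 r c q / c = Zs r c q + L" by simp
  then have S1e: "S1 r c q = - c * (Zs r c q + L)" using c by (simp add: field_simps)
  have "0 \<le> S1 r c q + c * Zs r c q + R" using ip_r_split[of q r c] qr by (simp add: R_def)
  then have "0 \<le> R - c * L" using S1e by (simp add: algebra_simps)
  moreover have "R - c * L = - (\<Sum>w\<in>UNIV. if r w < c then q$w * (c - r w) else 0)"
    unfolding R_def L_def sum_distrib_left sum_subtractf[symmetric] sum_negf[symmetric]
    by (rule sum.cong) (auto simp: algebra_simps)
  ultimately have le0: "(\<Sum>w\<in>UNIV. if r w < c then q$w * (c - r w) else 0) \<le> 0" by simp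
  have nn: "\<forall>w\<in>UNIV. 0 \<le> (if r w < c then q$w * (c - r w) else 0)"
    using Delta_nonneg[OF qD] by auto
  have "(\<Sum>w\<in>UNIV. if r w < c then q$w * (c - r w) else 0) = 0"
  proof -
    have "0 \<le> (\<Sum>w\<in>UNIV. if r w < c then q$w * (c - r w) else 0)" using nn by (intro sum_nonneg) auto
    then show ?thesis using le0 by linarith
  qed
  moreover have "(\<Sum>w\<in>UNIV. if r w < c then q$w * (c - r w) else 0) = 0 \<longleftrightarrow> (\<forall>w\<in>UNIV. (if r w < c then q$w * (c - r w) else 0) = 0)"
    by (rule sum_nonneg_eq_0_iff) (use nn in auto)
  ultimately have z: "\<forall>w. (if r w < c then q$w * (c - r w) else 0) = 0" by simp
  have "L = 0" unfolding L_def
  proof (rule sum.neutral, intro ballI)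
    fix w show "(if r w < c then q$w else 0) = 0" using z[rule_format, of w] by auto
  qed
  then have "S2 r c q = 0" using S1e S2_eq[of r c q] by simp
  moreover have "0 \<le> S1 r c q"
  proof -
    have Zn: "0 \<le> Zs r c q" unfolding Zs_def using Delta_nonneg[OF qD] by (intro sum_nonneg) auto
    have "c * Zs r c q \<le> 0" using c Zn by (intro mult_nonpos_nonneg) auto
    then show ?thesis using S1e \<open>L = 0\<close> by simp
  qed
  ultimately show ?thesis using qD by (simp add: Kset_def)
qed

lemma K_of_J:
  assumes c: "c < 0" and qD: "q \<in> DeltaOm" and g0: "ip q (gvec r c) = 0"
  shows "q \<in> Kset r c"
proof -
  have nn: "\<forall>w\<in>UNIV. 0 \<le> q$w * gvec r c w"
    using Delta_nonneg[OF qD] gvec_nonneg[of r c] by (auto intro: mult_nonneg_nonneg)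
  have "(\<Sum>w\<in>UNIV. q$w * gvec r c w) = 0 \<longleftrightarrow> (\<forall>w\<in>UNIV. q$w * gvec r c w = 0)"
    by (rule sum_nonneg_eq_0_iff) (use nn in auto)
  then have z: "\<forall>w. q$w * gvec r c w = 0"
    using g0 by (simp add: ip_def)
  have zq: "q$w = 0" if "c < r w" for w
  proof -
    have "gvec r c w = 1 - r w / c" using gvec_pos[of c r w] c that by simp
    moreover have "r w / c < 1" using c that by (simp add: divide_less_eq)
    ultimately have "0 < gvec r c w" by linarith
    then have "gvec r c w \<noteq> 0" by simp
    then show ?thesis using z[rule_format, of w] by simp
  qed
  have "S1 r c q = 0" unfolding S1_def by (rule sum.neutral) (auto simp: zq)
  moreover have "0 \<le> Zs r c q" unfolding Zs_def using Delta_nonneg[OF qD] by (intro sum_nonneg) auto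
  ultimately show ?thesis using qD S2_eq[of r c q] c
    by (simp add: Kset_def mult_nonpos_nonneg)
qed

lemma exists_c:
  fixes m :: "real^'w::finite"
  assumes m: "m \<in> DeltaOm" and neg: "ip m r < 0"
  shows "\<exists>c<0. m \<in> Kset r c"
proof -
  define R where "R = range r"
  have fR: "finite R" unfolding R_def by simp
  define C where "C = {x\<in>R. x < 0 \<and> S2 r x m \<le> 0}"
  define x0 where "x0 = Min R"
  have x0le: "x0 \<le> r w" for w unfolding x0_def R_def using fR by (intro Min_le) (auto simp: R_def)
  have x0R: "x0 \<in> R" unfolding x0_def using fR by (intro Min_in) (auto simp: R_def)
  have S2x0: "S2 r x0 m = ip m r" unfolding S2_def ip_def using x0le by simp
  have "x0 < 0"
  proof (rule ccontr)
    assume "\<not> x0 < 0"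
    then have "\<forall>w. 0 \<le> r w" using x0le by (meson le_less_trans not_le)
    then have "0 \<le> ip m r" unfolding ip_def using Delta_nonneg[OF m] by (intro sum_nonneg) auto
    then show False using neg by simp
  qed
  then have x0C: "x0 \<in> C" unfolding C_def using x0R S2x0 neg by simp
  have fC: "finite C" unfolding C_def using fR by simp
  define c where "c = Max C"
  have cC: "c \<in> C" unfolding c_def using fC x0C by (intro Max_in) auto
  have cmax: "\<And>x. x \<in> C \<Longrightarrow> x \<le> c" unfolding c_def using fC by (intro Max_ge)
  have "0 \<le> S1 r c m"
  proof (rule ccontr)
    assume a: "\<not> 0 \<le> S1 r c m"
    have "\<exists>w. (if c < r w then m$w * r w else 0) < 0"
    proof (rule ccontr)
      assume "\<not> ?thesis"
      then have "0 \<le> S1 r c m" unfolding S1_def by (intro sum_nonneg) (meson not_le)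
      then show False using a by simp
    qed
    then obtain w where w: "c < r w" "m$w * r w < 0" by (auto split: if_splits)
    have rw: "r w < 0" using w(2) Delta_nonneg[OF m, of w] by (auto simp: mult_less_0_iff)
    define D where "D = {x\<in>R. c < x}"
    have fD: "finite D" unfolding D_def using fR by simp
    have wD: "r w \<in> D" unfolding D_def R_def using w by simp
    define x1 where "x1 = Min D"
    have x1D: "x1 \<in> D" unfolding x1_def using fD wD by (intro Min_in) auto
    have x1le: "x1 \<le> r w" unfolding x1_def using fD wD by (intro Min_le)
    have eq: "(x1 \<le> r v) = (c < r v)" for v
    proof
      assume "x1 \<le> r v" then show "c < r v" using x1D by (auto simp: D_def)
    next
      assume "c < r v" then have "r v \<in> D" by (simp add: D_def R_def)
      then show "x1 \<le> r v" unfolding x1_def using fD by (intro Min_le)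
    qed
    have "S2 r x1 m = S1 r c m" unfolding S2_def S1_def eq ..
    then have "x1 \<in> C" unfolding C_def using x1D x1le rw a by (auto simp: D_def)
    then have "x1 \<le> c" by (rule cmax)
    then show False using x1D by (simp add: D_def)
  qed
  then show ?thesis using cC m unfolding C_def Kset_def by auto
qed

lemma ip_scale: "ip (a *\<^sub>R x) v = a * ip x v"
  by (simp add: ip_def sum_distrib_left algebra_simps)

lemma greedy_J_step:
  fixes p :: "real^'w::finite"
  assumes c: "c < 0" and pK: "p \<in> Kset r c" and pJ: "p \<in> setJ r"
    and a: "0 \<le> aI" "0 \<le> aJ" "aI + aJ = 1" and qI: "qI \<in> setI r" and qJ: "qJ \<in> DeltaOm"
    and pe: "p = aI *\<^sub>R qI + aJ *\<^sub>R qJ"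
    and mx: "\<forall>a' b' q' q''. 0 \<le> a' \<and> 0 \<le> b' \<and> a' + b' = 1 \<and> q' \<in> setI r \<and> q'' \<in> DeltaOm \<and>
               p = a' *\<^sub>R q' + b' *\<^sub>R q'' \<longrightarrow> a' \<le> aI"
  shows "(0 < aI \<longrightarrow> ip qI (gvec r c) = 1) \<and> (0 < aJ \<longrightarrow> ip qJ (gvec r c) = 0)"
proof -
  define s where "s = ip p (gvec r c)"
  obtain x :: "real^'w" where x: "\<forall>w. 0 \<le> x$w \<and> x$w \<le> p$w" "0 \<le> ip x r" "(\<Sum>w\<in>UNIV. x$w) = s"
    using K_x[OF c pK] unfolding s_def by blast
  have pD: "p \<in> DeltaOm" using pK by (simp add: Kset_def)
  have pneg: "ip p r < 0" using pJ by (auto simp: setJ_def setI_def)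
  have sle: "s \<le> aI"
  proof (cases "s = 0")
    case True then show ?thesis using a by simp
  next
    case False
    have s0: "0 < s" using False x(1,3) sum_nonneg[of UNIV "\<lambda>w. x$w"] by force
    have "s \<le> 1" using x(3) Delta_sum[OF pD] sum_mono[of UNIV "\<lambda>w. x$w" "\<lambda>w. p$w"] x(1) by auto
    moreover have "s \<noteq> 1"
    proof
      assume s1: "s = 1"
      have "(\<Sum>w\<in>UNIV. p$w - x$w) = 0" using x(3) s1 Delta_sum[OF pD] by (simp add: sum_subtractf)
      moreover have "(\<Sum>w\<in>UNIV. p$w - x$w) = 0 \<longleftrightarrow> (\<forall>w\<in>UNIV. p$w - x$w = 0)"
        by (rule sum_nonneg_eq_0_iff) (use x(1) in auto)
      ultimately have "x = p" by (simp add: vec_eq_iff)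
      then show False using x(2) pneg by simp
    qed
    ultimately have s1: "s < 1" by simp
    define q' where "q' = (1/s) *\<^sub>R x"
    define q'' where "q'' = (1/(1-s)) *\<^sub>R (p - x)"
    have q'D: "q' \<in> DeltaOm" unfolding DeltaOm_def q'_def using x(1,3) s0
      by (auto simp: sum_distrib_left[symmetric] sum_divide_distrib[symmetric])
    have "ip q' r = (1/s) * ip x r" unfolding q'_def by (rule ip_scale)
    then have q'I: "q' \<in> setI r" using q'D x(2) s0 by (simp add: setI_def)
    have "(\<Sum>w\<in>UNIV. p$w - x$w) = 1 - s" using x(3) Delta_sum[OF pD] by (simp add: sum_subtractf)
    then have q''D: "q'' \<in> DeltaOm" unfolding DeltaOm_def q''_def using x(1) s1
      by (auto simp: sum_divide_distrib[symmetric])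
    have "p = s *\<^sub>R q' + (1-s) *\<^sub>R q''"
      unfolding q'_def q''_def using s0 s1 by (simp add: vec_eq_iff field_simps)
    then show ?thesis using mx[rule_format, of s "1-s" q' q''] s0 s1 q'I q''D by simp
  qed
  have se: "s = aI * ip qI (gvec r c) + aJ * ip qJ (gvec r c)" unfolding s_def pe by (rule ip_add)
  have g1: "1 \<le> ip qI (gvec r c)" by (rule gI_bound[OF c qI])
  have g0: "0 \<le> ip qJ (gvec r c)" by (rule ip_nonneg[OF qJ gvec_nonneg])
  have t1: "0 \<le> aI * (ip qI (gvec r c) - 1)" using a g1 by simp
  have t2: "0 \<le> aJ * ip qJ (gvec r c)" using a g0 by simp
  have "aI * (ip qI (gvec r c) - 1) + aJ * ip qJ (gvec r c) = s - aI" using se by (simp add: algebra_simps)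
  then have e1: "aI * (ip qI (gvec r c) - 1) = 0" and e2: "aJ * ip qJ (gvec r c) = 0"
    using sle t1 t2 by linarith+
  show ?thesis using e1 e2 by auto
qed

lemma AE_borel_null:
  fixes \<mu> :: "'a::topological_space measure"
  assumes s: "sets \<mu> = sets borel" and P: "P \<in> sets borel" and z: "emeasure \<mu> (UNIV - P) = 0"
  shows "AE q in \<mu>. q \<in> P"
proof -
  have sp: "space \<mu> = UNIV" using sets_eq_imp_space_eq[OF s] by simp
  have "UNIV - P \<in> sets \<mu>" using s P by auto
  then show ?thesis using z by (subst AE_iff_measurable[of "UNIV - P"]) (auto simp: sp)
qed

lemma Kset_borel: "Kset r c \<in> sets (borel :: (real^'w::finite) measure)"
  unfolding Kset_def S1_def S2_def DeltaOm_def by measurable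

lemma P_borel:
  "{q. q \<in> Kset r c \<and> indicator (setI r) q = ip q g} \<in> sets (borel :: (real^'w::finite) measure)"
proof -
  have [measurable]: "Kset r c \<in> sets (borel :: (real^'w) measure)" by (rule Kset_borel)
  have [measurable]: "setI r \<in> sets (borel :: (real^'w) measure)" by (rule setI_borel)
  show ?thesis unfolding ip_def by measurable
qed

lemma greedy_adm: "greedy M p1 r \<sigma> \<Longrightarrow> admissible M p1 \<sigma>"
  by (simp add: greedy_def)

lemma case_J:
  fixes m :: "real^'w::finite"
  assumes m: "m \<in> DeltaOm" and l: "0 \<le> lam" "lam \<le> 1" and d: "0 \<le> \<delta>" "\<delta> < 1"
    and neg: "ip m r < 0"
    and gr: "greedy (trans_matrix m lam) m r \<sigma>"
  shows "optimal (trans_matrix m lam) m r \<delta> \<sigma>"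
proof -
  obtain c where c: "c < 0" and mK: "m \<in> Kset r c" using exists_c[OF m neg] by blast
  define g where "g = gvec r c"
  define P where "P = {q. q \<in> Kset r c \<and> indicator (setI r) q = ip q g}"
  have adm: "admissible (trans_matrix m lam) m \<sigma>" by (rule greedy_adm[OF gr])
  have Pb: "P \<in> sets borel" unfolding P_def by (rule P_borel)
  have PK: "q \<in> P \<Longrightarrow> q \<in> Kset r c" for q by (simp add: P_def)
  have KD: "q \<in> Kset r c \<Longrightarrow> q \<in> DeltaOm" for q by (simp add: Kset_def)
  have inv: "AE h in law \<sigma> n. \<forall>i<n. h i \<in> P" for n
  proof (rule law_AE[OF adm_meas[OF adm] Pb])
    fix n and h :: "nat \<Rightarrow> real^'w" assume h: "h \<in> space (hist n)" and hP: "\<forall>i<n. h i \<in> P"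
    define p where "p = belief (trans_matrix m lam) m n h"
    have pK: "p \<in> Kset r c"
    proof (cases n)
      case 0 then show ?thesis using mK by (simp add: p_def belief_def)
    next
      case (Suc k)
      then have hk: "h k \<in> Kset r c" using hP PK by auto
      then have "p = (1-lam) *\<^sub>R m + lam *\<^sub>R h k"
        using Suc phi_Delta[OF m KD[OF hk] l] by (simp add: p_def belief_def)
      then show ?thesis using K_conv[OF mK hk l] by simp
    qed
    have pD: "p \<in> DeltaOm" using KD[OF pK] .
    have gc: "greedy_choice r p (\<sigma> n h)"
      using gr h hP PK KD unfolding greedy_def p_def by blast
    have ss: "sets (\<sigma> n h) = sets borel" using sig_sets[OF adm_meas[OF adm, rule_format] h] .
    show "AE q in \<sigma> n h. q \<in> P"
    proof (cases "p \<in> setI r")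
      case True
      then have ret: "\<sigma> n h = return borel p" using gc by (simp add: greedy_choice_def)
      obtain x :: "real^'w" where x: "\<forall>w. 0 \<le> x$w \<and> x$w \<le> p$w" "(\<Sum>w\<in>UNIV. x$w) = ip p g"
        using K_x[OF c pK] unfolding g_def by blast
      have "ip p g \<le> 1" using x Delta_sum[OF pD] sum_mono[of UNIV "\<lambda>w. x$w" "\<lambda>w. p$w"] by auto
      moreover have "1 \<le> ip p g" unfolding g_def by (rule gI_bound[OF c True])
      ultimately have "p \<in> P" using True pK by (simp add: P_def)
      then have "emeasure (\<sigma> n h) (UNIV - P) = 0" using ret Pb by (simp add: emeasure_return)
      then show ?thesis by (rule AE_borel_null[OF ss Pb])
    next
      case False
      then have pJ: "p \<in> setJ r" using pD by (simp add: setJ_def)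
      then obtain aI aJ qI qJ where a: "0 \<le> aI" "0 \<le> aJ" "aI + aJ = 1" and qI: "qI \<in> setI r"
        and qJ: "qJ \<in> DeltaOm" and pe: "p = aI *\<^sub>R qI + aJ *\<^sub>R qJ"
        and mx: "\<forall>a' b' q' q''. 0 \<le> a' \<and> 0 \<le> b' \<and> a' + b' = 1 \<and> q' \<in> setI r \<and> q'' \<in> DeltaOm \<and>
               p = a' *\<^sub>R q' + b' *\<^sub>R q'' \<longrightarrow> a' \<le> aI"
        and em: "\<forall>A\<in>sets borel. emeasure (\<sigma> n h) A = ennreal (aI * indicator A qI + aJ * indicator A qJ)"
        using gc by (auto simp: greedy_choice_def)
      have st: "(0 < aI \<longrightarrow> ip qI g = 1) \<and> (0 < aJ \<longrightarrow> ip qJ g = 0)"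
        unfolding g_def by (rule greedy_J_step[OF c pK pJ a qI qJ pe mx])
      have t1: "aI * indicator (UNIV - P) qI = 0"
      proof (cases "aI = 0")
        case False
        then have "ip qI g = 1" using st a by auto
        then have "qI \<in> P" using K_of_I[OF c qI] qI by (simp add: P_def g_def)
        then show ?thesis by simp
      qed simp
      have t2: "aJ * indicator (UNIV - P) qJ = 0"
      proof (cases "aJ = 0")
        case False
        then have q0: "ip qJ g = 0" using st a by auto
        have "qJ \<notin> setI r" using gI_bound[OF c] q0 unfolding g_def by force
        then have "qJ \<in> P" using K_of_J[OF c qJ] q0 by (simp add: P_def g_def)
        then show ?thesis by simp
      qed simp
      have "UNIV - P \<in> sets borel" using Pb by auto
      then have "emeasure (\<sigma> n h) (UNIV - P) = ennreal (aI * indicator (UNIV - P) qI + aJ * indicator (UNIV - P) qJ)"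
        using em by blast
      also have "\<dots> = 0" by (simp only: t1 t2) simp
      finally have "emeasure (\<sigma> n h) (UNIV - P) = 0" .
      then show ?thesis by (rule AE_borel_null[OF ss Pb])
    qed
  qed
  have inv2: "\<forall>n. AE h in law \<sigma> (Suc n). indicator (setI r) (h n) = ip (h n) g"
  proof
    fix n show "AE h in law \<sigma> (Suc n). indicator (setI r) (h n) = ip (h n) g"
      using inv[of "Suc n"] by eventually_elim (simp add: P_def)
  qed
  show ?thesis
    by (rule main_opt[OF m l d _ _ adm inv2]) (use gI_bound[OF c, of _ r] gvec_nonneg[of r c] in \<open>auto simp: g_def\<close>)
qed

lemma case_I:
  fixes m :: "real^'w::finite"
  assumes m: "m \<in> DeltaOm" and l: "0 \<le> lam" "lam \<le> 1" and d: "0 \<le> \<delta>" "\<delta> < 1"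
    and pos: "0 \<le> ip m r"
    and gr: "greedy (trans_matrix m lam) m r \<sigma>"
  shows "optimal (trans_matrix m lam) m r \<delta> \<sigma>"
proof -
  define g :: "'w \<Rightarrow> real" where "g = (\<lambda>_. 1)"
  have ipg: "q \<in> DeltaOm \<Longrightarrow> ip q g = 1" for q by (simp add: ip_def g_def Delta_sum)
  have mI: "m \<in> setI r" using m pos by (simp add: setI_def)
  have adm: "admissible (trans_matrix m lam) m \<sigma>" by (rule greedy_adm[OF gr])
  have Pb: "{m} \<in> sets (borel :: (real^'w) measure)" by simp
  have inv: "AE h in law \<sigma> n. \<forall>i<n. h i \<in> {m}" for n
  proof (rule law_AE[OF adm_meas[OF adm] Pb])
    fix n and h :: "nat \<Rightarrow> real^'w" assume h: "h \<in> space (hist n)" and hP: "\<forall>i<n. h i \<in> {m}"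
    have pm: "belief (trans_matrix m lam) m n h = m"
    proof (cases n)
      case 0 then show ?thesis by (simp add: belief_def)
    next
      case (Suc k)
      then have "h k = m" using hP by auto
      then show ?thesis using Suc phi_Delta[OF m m l] by (simp add: belief_def algebra_simps)
    qed
    have gc: "greedy_choice r m (\<sigma> n h)"
      using gr h hP m pm unfolding greedy_def by force
    then have ret: "\<sigma> n h = return borel m" using mI by (simp add: greedy_choice_def)
    have ss: "sets (\<sigma> n h) = sets borel" using sig_sets[OF adm_meas[OF adm, rule_format] h] .
    have "emeasure (\<sigma> n h) (UNIV - {m}) = 0" using ret by (simp add: emeasure_return)
    then show "AE q in \<sigma> n h. q \<in> {m}" by (rule AE_borel_null[OF ss Pb])
  qed
  have inv2: "\<forall>n. AE h in law \<sigma> (Suc n). indicator (setI r) (h n) = ip (h n) g"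
  proof
    fix n show "AE h in law \<sigma> (Suc n). indicator (setI r) (h n) = ip (h n) g"
      using inv[of "Suc n"] by eventually_elim (simp add: mI ipg[OF m])
  qed
  show ?thesis
    by (rule main_opt[OF m l d _ _ adm inv2]) (auto simp: g_def ip_def Delta_sum setI_def)
qed

theorem theorem2:
  fixes m :: "real^'w::finite" and lam \<delta> :: real and r :: "'w \<Rightarrow> real"
  assumes "m \<in> DeltaOm"
    and "0 \<le> lam" and "lam < 1"
    and "irreducible_chain (trans_matrix m lam)"
    and "0 \<le> \<delta>" and "\<delta> < 1"
  shows "\<forall>\<sigma>. greedy (trans_matrix m lam) m r \<sigma> \<longrightarrow> optimal (trans_matrix m lam) m r \<delta> \<sigma>"
proof (intro allI impI)
  fix \<sigma> assume gr: "greedy (trans_matrix m lam) m r \<sigma>"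
  have l: "0 \<le> lam" "lam \<le> 1" using assms by auto
  show "optimal (trans_matrix m lam) m r \<delta> \<sigma>"
  proof (cases "ip m r < 0")
    case True show ?thesis by (rule case_J[OF assms(1) l assms(5,6) True gr])
  next
    case False then show ?thesis using case_I[OF assms(1) l assms(5,6) _ gr] by simp
  qed
qed

end
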